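(* Fix a class index $k$, an iteration $t$, data $S_1,\dots,S_N$, weights $r^{(t)}_{nk}\ge 0$, and a tuning parameter $\rho>0$. For a coefficient vector $\boldsymbol B_k\in\mathbb R^H$ let $\hat\mu^{(t)}_\phi(\boldsymbol B_k)$ be the solution $\mu$ of $$\sum_{n=1}^N r^{(t)}_{nk}\,L(S_n)\,\phi_\rho\Big(\log\mathrm{NHP}(S_n\mid\boldsymbol B_k)/L(S_n)-\mu\Big)=0.$$ Then the gradient $\varrho^{(t)}_k:=\frac{\partial\hat\mu^{(t)}_\phi(\boldsymbol B_k)}{\partial\boldsymbol B_k}\Big|_{\boldsymbol B_k^{(t-1)}}$ equals $$\sum_{n=1}^N\frac{r^{(t)}_{nk}w^{(t)}_{nk}}{\sum_{n'=1}^N r^{(t)}_{n'k}w^{(t)}_{n'k}L(S_{n'})}\cdot\frac{\partial\log\mathrm{NHP}(S_n\mid\boldsymbol B_k)}{\partial\boldsymbol B_k}\Big|_{\boldsymbol B_k^{(t-1)}},$$ where $w^{(t)}_{nk}=\phi_\rho'\Big(\log\mathrm{NHP}(S_n\mid\boldsymbol B^{(t-1)}_k)/L(S_n)-\hat\mu^{(t)}_\phi(\boldsymbol B^{(t-1)}_k)\Big)$.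
   Context: Event streams are observed over $L(S)$ periods of length $T$. Given periodic basis functions $\kappa_1,\dots,\kappa_H$ on $[0,T]$ (extended $T$-periodically) and $\boldsymbol B_k=(b_{k,1},\dots,b_{k,H})$, set $\lambda_k(t)=\sum_h b_{k,h}\kappa_h(t)$ and, for $S=(t_1,\dots,t_M)$, $\mathrm{NHP}(S\mid\boldsymbol B_k)=\prod_i\lambda_k(t_i)\exp\big(-\int_0^{L(S)T}\lambda_k(t)dt\big)$. The Catoni-type influence function is $\phi(x)=\log(1+x+x^2/2)$ for $0\le x\le 2$, $\phi(x)=\frac{0.032}{9}(x-9.5)^3+1.5+\log 5$ for $2<x\le 9.5$, $\phi(x)=1.5+\log 5$ for $x>9.5$, and $\phi(x)=-\phi(-x)$ for $x<0$; $\phi_\rho(x):=\rho^{-1}\phi(\rho x)$. *)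

theory Defs
  imports "HOL-Analysis.Analysis"
begin

definition per_ext :: "real \<Rightarrow> (real \<Rightarrow> real) \<Rightarrow> real \<Rightarrow> real" where
  "per_ext T f t = f (T * frac (t / T))"

definition lam :: "('h::finite \<Rightarrow> real \<Rightarrow> real) \<Rightarrow> real \<Rightarrow> real^'h \<Rightarrow> real \<Rightarrow> real" where
  "lam \<kappa> T B t = (\<Sum>h\<in>UNIV. B $ h * per_ext T (\<kappa> h) t)"

text \<open>NHP likelihood of an event sequence S (list of event times) observed over L(S) periods.\<close>
definition NHP :: "('h::finite \<Rightarrow> real \<Rightarrow> real) \<Rightarrow> real \<Rightarrow> (real list \<Rightarrow> nat)
    \<Rightarrow> real list \<Rightarrow> real^'h \<Rightarrow> real" where
  "NHP \<kappa> T L S B =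
     (\<Prod>t\<leftarrow>S. lam \<kappa> T B t) * exp (- integral {0 .. real (L S) * T} (lam \<kappa> T B))"

text \<open>Catoni-type influence function.\<close>
definition phi :: "real \<Rightarrow> real" where
  "phi x = (if 0 \<le> x then
              (if x \<le> 2 then ln (1 + x + x\<^sup>2 / 2)
               else if x \<le> 9.5 then 0.032 / 9 * (x - 9.5) ^ 3 + 1.5 + ln 5
               else 1.5 + ln 5)
            else
              - (if - x \<le> 2 then ln (1 + (- x) + (- x)\<^sup>2 / 2)
                 else if - x \<le> 9.5 then 0.032 / 9 * ((- x) - 9.5) ^ 3 + 1.5 + ln 5
                 else 1.5 + ln 5))"

definition phi_rho :: "real \<Rightarrow> real \<Rightarrow> real" where
  "phi_rho \<rho> x = phi (\<rho> * x) / \<rho>"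

definition est_eq :: "('h::finite \<Rightarrow> real \<Rightarrow> real) \<Rightarrow> real \<Rightarrow> (real list \<Rightarrow> nat)
    \<Rightarrow> nat \<Rightarrow> (nat \<Rightarrow> real list) \<Rightarrow> (nat \<Rightarrow> real) \<Rightarrow> real \<Rightarrow> real^'h \<Rightarrow> real \<Rightarrow> real" where
  "est_eq \<kappa> T L N S r \<rho> B \<mu> =
     (\<Sum>n = 1..N. r n * real (L (S n)) *
        phi_rho \<rho> (ln (NHP \<kappa> T L (S n) B) / real (L (S n)) - \<mu>))"

definition mu_hat :: "('h::finite \<Rightarrow> real \<Rightarrow> real) \<Rightarrow> real \<Rightarrow> (real list \<Rightarrow> nat)
    \<Rightarrow> nat \<Rightarrow> (nat \<Rightarrow> real list) \<Rightarrow> (nat \<Rightarrow> real) \<Rightarrow> real \<Rightarrow> real^'h \<Rightarrow> real" where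
  "mu_hat \<kappa> T L N S r \<rho> B = (THE \<mu>. est_eq \<kappa> T L N S r \<rho> B \<mu> = 0)"

end

theory Submission
  imports Defs
begin


lemma glue_deriv:
  fixes f g h :: "real \<Rightarrow> real"
  assumes g: "(g has_real_derivative d) (at x)" and h: "(h has_real_derivative d) (at x)"
    and dp: "\<delta> > 0"
    and fg: "\<And>y. x - \<delta> < y \<Longrightarrow> y \<le> x \<Longrightarrow> f y = g y"
    and fh: "\<And>y. x \<le> y \<Longrightarrow> y < x + \<delta> \<Longrightarrow> f y = h y"
  shows "(f has_real_derivative d) (at x)"
proof -
  have gq: "((\<lambda>y. (g y - g x) / (y - x)) \<longlongrightarrow> d) (at x)"
    using g by (simp add: has_field_derivative_iff)
  have hq: "((\<lambda>y. (h y - h x) / (y - x)) \<longlongrightarrow> d) (at x)"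
    using h by (simp add: has_field_derivative_iff)
  have fx: "f x = g x" "f x = h x" using fg[of x] fh[of x] dp by auto
  have L: "((\<lambda>y. (f y - f x) / (y - x)) \<longlongrightarrow> d) (at_left x)"
  proof (rule Lim_transform_eventually[OF tendsto_mono[OF at_le gq]])
    show "\<forall>\<^sub>F y in at_left x. (g y - g x) / (y - x) = (f y - f x) / (y - x)"
      unfolding eventually_at_left_field using dp fg fx
      by (intro exI[of _ "x - \<delta>"]) auto
  qed auto
  have R: "((\<lambda>y. (f y - f x) / (y - x)) \<longlongrightarrow> d) (at_right x)"
  proof (rule Lim_transform_eventually[OF tendsto_mono[OF at_le hq]])
    show "\<forall>\<^sub>F y in at_right x. (h y - h x) / (y - x) = (f y - f x) / (y - x)"
      unfolding eventually_at_right_field using dp fh fx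
      by (intro exI[of _ "x + \<delta>"]) auto
  qed auto
  have "((\<lambda>y. (f y - f x) / (y - x)) \<longlongrightarrow> d) (at x)"
    using L R by (simp add: filterlim_split_at)
  then show ?thesis by (simp add: has_field_derivative_iff)
qed



definition "pA y = ln (1 + y + y\<^sup>2 / 2)"
definition "pB (y::real) = 0.032 / 9 * (y - 9.5) ^ 3 + 1.5 + ln 5"

lemma pA_pos: "1 + y + y\<^sup>2 / 2 > (0::real)"
proof -
  have "1 + y + y\<^sup>2 / 2 = ((y+1)\<^sup>2 + 1) / 2" by (simp add: power2_eq_square field_simps)
  also have "\<dots> > 0" by (simp add: add_nonneg_pos)
  finally show ?thesis .
qed

lemma pA_der: "(pA has_real_derivative (1 + y) / (1 + y + y\<^sup>2 / 2)) (at y)"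
  unfolding pA_def using pA_pos[of y]
  by (auto intro!: derivative_eq_intros simp: power2_eq_square field_simps)

lemma pB_der: "(pB has_real_derivative 0.032 / 9 * (3 * (y - 9.5)\<^sup>2)) (at y)"
  unfolding pB_def
  by (auto intro!: derivative_eq_intros simp: power2_eq_square field_simps)

lemma phi_nonneg: "0 \<le> x \<Longrightarrow> phi x = (if x \<le> 2 then pA x else if x \<le> 9.5 then pB x else 1.5 + ln 5)"
  unfolding phi_def pA_def pB_def by simp

lemma phi_odd: "phi (- x) = - phi x"
  unfolding phi_def by (cases "x < 0") (simp_all add: not_less)

lemma pA2: "pA 2 = pB 2"
  by (simp add: pA_def pB_def power2_eq_square power3_eq_cube)

lemma phi_pos_deriv:
  assumes "x > 0" shows "\<exists>d. (phi has_real_derivative d) (at x)"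
proof -
  consider "x < 2" | "x = 2" | "2 < x" "x < 9.5" | "x = 9.5" | "x > 9.5" by linarith
  then show ?thesis
  proof cases
    case 1
    show ?thesis
      by (rule exI, rule has_field_derivative_transform_within_open[OF pA_der, of "{0<..<2}"])
         (use 1 assms in \<open>auto simp: phi_nonneg\<close>)
  next
    case 2
    have a: "(pA has_real_derivative 3/5) (at 2)" using pA_der[of 2] by (simp add: power2_eq_square)
    have b: "(pB has_real_derivative 3/5) (at 2)" using pB_der[of 2] by (simp add: power2_eq_square)
    have "(phi has_real_derivative 3/5) (at 2)"
      by (rule glue_deriv[OF a b, where \<delta>=1]) (simp_all add: phi_nonneg pA2)
    then show ?thesis using 2 by auto
  next
    case 3
    show ?thesis
      by (rule exI, rule has_field_derivative_transform_within_open[OF pB_der, of "{2<..<9.5}"])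
         (use 3 in \<open>auto simp: phi_nonneg\<close>)
  next
    case 4
    have a: "(pB has_real_derivative 0) (at 9.5)" using pB_der[of "9.5"] by (simp add: power2_eq_square)
    have b: "((\<lambda>_. 1.5 + ln 5) has_real_derivative 0) (at 9.5)" by (rule DERIV_const)
    have "(phi has_real_derivative 0) (at 9.5)"
      by (rule glue_deriv[OF a b, where \<delta>=1]) (simp_all add: phi_nonneg pB_def)
    then show ?thesis using 4 by blast
  next
    case 5
    show ?thesis
      by (rule exI, rule has_field_derivative_transform_within_open[OF DERIV_const[of "1.5 + ln 5"], of "{9.5<..}"])
         (use 5 in \<open>auto simp: phi_nonneg\<close>)
  qed
qed

lemma phi_deriv: "\<exists>d. (phi has_real_derivative d) (at x)"
proof -
  consider "x > 0" | "x = 0" | "x < 0" by linarith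
  then show ?thesis
  proof cases
    case 1 then show ?thesis by (rule phi_pos_deriv)
  next
    case 2
    have a: "(pA has_real_derivative 1) (at 0)" using pA_der[of 0] by simp
    have b: "((\<lambda>y. - pA (- y)) has_real_derivative 1) (at 0)"
    proof -
      have "((\<lambda>y. pA (- y)) has_real_derivative 1 * (-1)) (at 0)"
        using DERIV_chain2[OF pA_der[of "- 0"] DERIV_minus[OF DERIV_ident]] by simp
      then show ?thesis using DERIV_minus by fastforce
    qed
    have c: "phi y = - pA (- y)" if "-1 < y" "y \<le> 0" for y
    proof -
      have "phi y = - phi (- y)" using phi_odd[of "-y"] by simp
      also have "\<dots> = - pA (- y)" using that by (simp add: phi_nonneg)
      finally show ?thesis .
    qed
    have "(phi has_real_derivative 1) (at 0)"
      apply (rule glue_deriv[OF b a, where \<delta>=1])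
      subgoal by simp
      subgoal for y using c[of y] by simp
      subgoal for y using phi_nonneg[of y] by simp
      done
    then show ?thesis using 2 by auto
  next
    case 3
    then obtain d where d: "(phi has_real_derivative d) (at (-x))" using phi_pos_deriv[of "-x"] by auto
    have "((\<lambda>y. - phi (- y)) has_real_derivative d) (at x)"
      using DERIV_minus[OF DERIV_chain2[OF d DERIV_minus[OF DERIV_ident]]] by simp
    moreover have "(\<lambda>y. - phi (- y)) = phi" using phi_odd by (simp add: fun_eq_iff)
    ultimately show ?thesis by auto
  qed
qed

lemma phi_rho_differentiable: "\<rho> \<noteq> 0 \<Longrightarrow> phi_rho \<rho> differentiable (at x)"
proof -
  assume r: "\<rho> \<noteq> 0"
  obtain d where d: "(phi has_real_derivative d) (at (\<rho> * x))" using phi_deriv by blast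
  have "((\<lambda>x. phi (\<rho> * x) / \<rho>) has_real_derivative d * \<rho> / \<rho>) (at x)"
    using d by (auto intro!: derivative_eq_intros DERIV_chain2[where f=phi])
  then show ?thesis unfolding phi_rho_def[abs_def] using real_differentiable_def by blast
qed



lemma deriv_mult_cont0:
  fixes g :: "'a::real_normed_vector \<Rightarrow> real"
  assumes g: "(g has_derivative g') (at x)" and g0: "g x = 0" and K: "(K \<longlongrightarrow> k) (at x)"
  shows "((\<lambda>y. K y * g y) has_derivative (\<lambda>h. k * g' h)) (at x)"
proof -
  have bl: "bounded_linear g'" using g has_derivative_bounded_linear by blast
  obtain C where C: "C > 0" "\<And>h. norm (g' h) \<le> norm h * C"
    using bounded_linear.pos_bounded[OF bl] by blast
  have E: "((\<lambda>y. (K y - k) * g y) has_derivative (\<lambda>h. 0)) (at x)"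
    unfolding has_derivative_within_alt2
  proof (intro conjI allI impI)
    show "bounded_linear (\<lambda>h. 0::real)" by simp
    fix e :: real assume e: "e > 0"
    have ev1: "\<forall>\<^sub>F y in at x. norm (g y - g x - g' (y - x)) \<le> 1 * norm (y - x)"
      using g unfolding has_derivative_within_alt2 by (metis zero_less_one)
    have ev2: "\<forall>\<^sub>F y in at x. dist (K y) k < e / (C + 1)"
      using K e C(1) by (simp add: tendsto_iff)
    show "\<forall>\<^sub>F y in at x. norm ((K y - k) * g y - (K x - k) * g x - 0) \<le> e * norm (y - x)"
      using ev1 ev2
    proof eventually_elim
      case (elim y)
      have a: "\<bar>g y\<bar> \<le> (C + 1) * norm (y - x)"
      proof -
        have "\<bar>g y\<bar> \<le> \<bar>g y - g' (y - x)\<bar> + \<bar>g' (y - x)\<bar>" by linarith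
        also have "\<dots> \<le> norm (y - x) + norm (y - x) * C" using elim(1) C(2)[of "y - x"] g0 by simp
        finally show ?thesis by (simp add: algebra_simps)
      qed
      have b: "\<bar>K y - k\<bar> \<le> e / (C + 1)" using elim(2) by (simp add: dist_real_def)
      have "\<bar>(K y - k) * g y\<bar> \<le> e / (C + 1) * ((C + 1) * norm (y - x))"
        unfolding abs_mult by (rule mult_mono[OF b a]) (use e C(1) in auto)
      also have "\<dots> = e * norm (y - x)" using C(1) by (simp add: field_simps)
      finally show ?case using g0 by simp
    qed
  qed
  have M: "((\<lambda>y. k * g y) has_derivative (\<lambda>h. k * g' h)) (at x)"
    using has_derivative_mult_right[OF g] by simp
  have "((\<lambda>y. k * g y + (K y - k) * g y) has_derivative (\<lambda>h. k * g' h + 0)) (at x)"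
    by (rule has_derivative_add[OF M E])
  then show ?thesis by (simp add: algebra_simps)
qed



theorem proposition2:
  fixes \<kappa> :: "'h::finite \<Rightarrow> real \<Rightarrow> real"
    and T \<rho> :: real and L :: "real list \<Rightarrow> nat" and N :: nat
    and S :: "nat \<Rightarrow> real list" and r :: "nat \<Rightarrow> real" and B0 :: "real^'h"
  defines "w \<equiv> (\<lambda>n. deriv (phi_rho \<rho>)
              (ln (NHP \<kappa> T L (S n) B0) / real (L (S n)) - mu_hat \<kappa> T L N S r \<rho> B0))"
  assumes T_pos: "T > 0"
    and rho_pos: "\<rho> > 0"
    and r_nonneg: "\<And>n. n \<in> {1..N} \<Longrightarrow> r n \<ge> 0"
    and L_pos: "\<And>n. n \<in> {1..N} \<Longrightarrow> L (S n) > 0"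
    and unique_sol: "\<exists>\<epsilon>>0. \<forall>B. dist B B0 < \<epsilon> \<longrightarrow> (\<exists>!\<mu>. est_eq \<kappa> T L N S r \<rho> B \<mu> = 0)"
    and logNHP_diff: "\<And>n. n \<in> {1..N} \<Longrightarrow> (\<lambda>B. ln (NHP \<kappa> T L (S n) B)) differentiable (at B0)"
    and denom_nz: "(\<Sum>n' = 1..N. r n' * w n' * real (L (S n'))) \<noteq> 0"
  shows "(mu_hat \<kappa> T L N S r \<rho> has_derivative
           (\<lambda>v. \<Sum>n = 1..N. (r n * w n / (\<Sum>n' = 1..N. r n' * w n' * real (L (S n'))))
                 * frechet_derivative (\<lambda>B. ln (NHP \<kappa> T L (S n) B)) (at B0) v)) (at B0)"
proof -
  define g where "g = (\<lambda>n B. ln (NHP \<kappa> T L (S n) B))"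
  define Ln where "Ln = (\<lambda>n. real (L (S n)))"
  define f where "f = phi_rho \<rho>"
  define mu where "mu = mu_hat \<kappa> T L N S r \<rho>"
  define F where "F = est_eq \<kappa> T L N S r \<rho>"
  define I where "I = {1..N}"
  define D where "D = (\<Sum>n' = 1..N. r n' * w n' * real (L (S n')))"
  define \<mu>0 where "\<mu>0 = mu B0"
  define x0 where "x0 = (\<lambda>n. g n B0 / Ln n - \<mu>0)"
  have finI: "finite I" unfolding I_def by simp
  have Fdef: "F B \<mu> = (\<Sum>n\<in>I. r n * Ln n * f (g n B / Ln n - \<mu>))" for B \<mu>
    unfolding F_def est_eq_def I_def Ln_def f_def g_def by simp
  have D0: "D \<noteq> 0" using denom_nz D_def by simp
  have wx: "w n = deriv f (x0 n)" for n
    unfolding w_def x0_def f_def g_def Ln_def \<mu>0_def mu_def by simp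
  have Lnz: "Ln n \<noteq> 0" if "n \<in> I" for n using L_pos[of n] that unfolding Ln_def I_def by simp
  obtain \<epsilon> where \<epsilon>: "\<epsilon> > 0" "\<And>B. dist B B0 < \<epsilon> \<Longrightarrow> \<exists>!\<mu>. F B \<mu> = 0"
    using unique_sol unfolding F_def by blast
  have mu_root: "F B (mu B) = 0" if "dist B B0 < \<epsilon>" for B
    using theI'[OF \<epsilon>(2)[OF that]] unfolding mu_def mu_hat_def F_def by simp
  have mu_uniq: "mu B = z" if "dist B B0 < \<epsilon>" "F B z = 0" for B z
    using \<epsilon>(2)[OF that(1)] mu_root[OF that(1)] that(2) by blast
  have F0: "F B0 \<mu>0 = 0" using mu_root[of B0] \<epsilon>(1) unfolding \<mu>0_def by simp
  have fder: "(f has_real_derivative deriv f x) (at x)" for x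
    unfolding f_def using phi_rho_differentiable[of \<rho> x] rho_pos
    by (simp add: DERIV_deriv_iff_real_differentiable)
  have fcont: "isCont f x" for x using fder[of x] DERIV_isCont by blast
  have gdiff: "(g n has_derivative frechet_derivative (g n) (at B0)) (at B0)" if "n \<in> I" for n
    using logNHP_diff[of n] that unfolding g_def I_def by (simp add: frechet_derivative_works)
  have gtend: "(g n \<longlongrightarrow> g n B0) (at B0)" if "n \<in> I" for n
    using differentiable_imp_continuous_within[OF logNHP_diff[of n]] that
    unfolding g_def I_def by (simp add: continuous_within)
  have Fder: "((\<lambda>\<mu>. F B0 \<mu>) has_real_derivative - D) (at \<mu>0)"
  proof -
    have "((\<lambda>\<mu>. \<Sum>n\<in>I. r n * Ln n * f (g n B0 / Ln n - \<mu>)) has_real_derivative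
            (\<Sum>n\<in>I. r n * Ln n * (deriv f (x0 n) * (0 - 1)))) (at \<mu>0)"
      apply (rule DERIV_sum)
      apply (rule DERIV_cmult)
      apply (rule DERIV_chain2[of f])
      subgoal for n using fder[of "x0 n"] unfolding x0_def by simp
      by (auto intro!: derivative_eq_intros)
    moreover have "(\<Sum>n\<in>I. r n * Ln n * (deriv f (x0 n) * (0 - 1))) = - D"
      unfolding D_def I_def Ln_def wx by (simp add: sum_negf[symmetric] algebra_simps)
    ultimately show ?thesis using Fdef by simp
  qed
  have Ftend: "((\<lambda>B. F B c) \<longlongrightarrow> F B0 c) (at B0)" for c
    unfolding Fdef
    by (intro tendsto_sum tendsto_mult tendsto_const isCont_tendsto_compose[OF fcont]
          tendsto_diff tendsto_divide gtend) (auto dest: Lnz)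
  have Fcont_on: "continuous_on A (F B)" for A B
    unfolding Fdef
    by (intro continuous_intros continuous_on_compose2[OF continuous_at_imp_continuous_on[of UNIV f]])
       (auto simp: fcont)
  obtain d where d: "d > 0" "\<And>h. 0 < h \<Longrightarrow> h < d \<Longrightarrow> F B0 (\<mu>0 - h) * F B0 (\<mu>0 + h) < 0"
  proof (cases "D > 0")
    case True
    then have nd: "- D < 0" by simp
    obtain d1 where d1: "d1 > 0" "\<And>h. h > 0 \<Longrightarrow> h < d1 \<Longrightarrow> F B0 \<mu>0 > F B0 (\<mu>0 + h)"
      using DERIV_neg_dec_right[OF Fder nd] by blast
    obtain d2 where d2: "d2 > 0" "\<And>h. h > 0 \<Longrightarrow> h < d2 \<Longrightarrow> F B0 \<mu>0 < F B0 (\<mu>0 - h)"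
      using DERIV_neg_dec_left[OF Fder nd] by blast
    show ?thesis
    proof (rule that[of "min d1 d2"])
      fix h :: real assume "0 < h" "h < min d1 d2"
      then have "F B0 (\<mu>0 + h) < 0" "F B0 (\<mu>0 - h) > 0" using d1 d2 F0 by auto
      then show "F B0 (\<mu>0 - h) * F B0 (\<mu>0 + h) < 0" by (simp add: mult_pos_neg)
    qed (use d1 d2 in auto)
  next
    case False
    then have nd: "- D > 0" using D0 by simp
    obtain d1 where d1: "d1 > 0" "\<And>h. h > 0 \<Longrightarrow> h < d1 \<Longrightarrow> F B0 \<mu>0 < F B0 (\<mu>0 + h)"
      using DERIV_pos_inc_right[OF Fder nd] by blast
    obtain d2 where d2: "d2 > 0" "\<And>h. h > 0 \<Longrightarrow> h < d2 \<Longrightarrow> F B0 (\<mu>0 - h) < F B0 \<mu>0"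
      using DERIV_pos_inc_left[OF Fder nd] by blast
    show ?thesis
    proof (rule that[of "min d1 d2"])
      fix h :: real assume "0 < h" "h < min d1 d2"
      then have "F B0 (\<mu>0 + h) > 0" "F B0 (\<mu>0 - h) < 0" using d1 d2 F0 by auto
      then show "F B0 (\<mu>0 - h) * F B0 (\<mu>0 + h) < 0" by (simp add: mult_neg_pos)
    qed (use d1 d2 in auto)
  qed
  have mutend: "(mu \<longlongrightarrow> \<mu>0) (at B0)"
    unfolding tendsto_iff
  proof (intro allI impI)
    fix e :: real assume e: "e > 0"
    define h where "h = min e d / 2"
    have h: "0 < h" "h < d" "h < e" using e d(1) unfolding h_def by auto
    have q0: "F B0 (\<mu>0 - h) * F B0 (\<mu>0 + h) < 0" using d(2) h by auto
    have "((\<lambda>B. F B (\<mu>0 - h) * F B (\<mu>0 + h)) \<longlongrightarrow> F B0 (\<mu>0 - h) * F B0 (\<mu>0 + h)) (at B0)"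
      by (intro tendsto_mult Ftend)
    then have ev1: "\<forall>\<^sub>F B in at B0. F B (\<mu>0 - h) * F B (\<mu>0 + h) < 0"
      using q0 order_tendstoD(2) by blast
    have ev2: "\<forall>\<^sub>F B in at B0. dist B B0 < \<epsilon>"
      using \<epsilon>(1) eventually_at by blast
    show "\<forall>\<^sub>F B in at B0. dist (mu B) \<mu>0 < e"
      using ev1 ev2
    proof eventually_elim
      case (elim B)
      have "\<exists>z. \<mu>0 - h \<le> z \<and> z \<le> \<mu>0 + h \<and> F B z = 0"
      proof (cases "F B (\<mu>0 - h) < 0")
        case True
        then have "F B (\<mu>0 + h) > 0" using elim(1) by (simp add: mult_less_0_iff)
        then show ?thesis using IVT'[of "F B" "\<mu>0 - h" 0 "\<mu>0 + h"] True h Fcont_on by auto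
      next
        case False
        then have "F B (\<mu>0 - h) > 0" "F B (\<mu>0 + h) < 0" using elim(1) by (auto simp: mult_less_0_iff)
        then show ?thesis using IVT2'[of "F B" "\<mu>0 + h" 0 "\<mu>0 - h"] h Fcont_on by auto
      qed
      then obtain z where z: "\<mu>0 - h \<le> z" "z \<le> \<mu>0 + h" "F B z = 0" by blast
      have "mu B = z" using mu_uniq[OF elim(2) z(3)] .
      then show ?case using z h by (simp add: dist_real_def abs_le_iff)
    qed
  qed

  define Q where "Q = (\<lambda>n x. if x = x0 n then w n else (f x - f (x0 n)) / (x - x0 n))"
  have Qid: "f x - f (x0 n) = Q n x * (x - x0 n)" for n x
    unfolding Q_def by auto
  have Qcont: "isCont (Q n) (x0 n)" for n
  proof -
    have "((\<lambda>x. (f x - f (x0 n)) / (x - x0 n)) \<longlongrightarrow> w n) (at (x0 n))"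
      using fder[of "x0 n"] unfolding wx by (simp add: has_field_derivative_iff)
    then have "(Q n \<longlongrightarrow> w n) (at (x0 n))"
    proof (rule Lim_transform_eventually)
      show "\<forall>\<^sub>F x in at (x0 n). (f x - f (x0 n)) / (x - x0 n) = Q n x"
        unfolding Q_def eventually_at_filter by simp
    qed
    then show ?thesis unfolding isCont_def Q_def by simp
  qed
  define xB where "xB = (\<lambda>n B. g n B / Ln n - mu B)"
  define p where "p = (\<lambda>n B. Q n (xB n B))"
  define P where "P = (\<lambda>B. \<Sum>n\<in>I. r n * Ln n * p n B)"
  define K where "K = (\<lambda>n B. r n * p n B / P B)"
  have xBt: "(xB n \<longlongrightarrow> x0 n) (at B0)" if "n \<in> I" for n
    unfolding xB_def x0_def by (intro tendsto_intros gtend mutend that) (use Lnz that in auto)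
  have pt: "(p n \<longlongrightarrow> w n) (at B0)" if "n \<in> I" for n
  proof -
    have "((\<lambda>B. Q n (xB n B)) \<longlongrightarrow> Q n (x0 n)) (at B0)"
      by (rule isCont_tendsto_compose[OF Qcont xBt[OF that]])
    then show ?thesis unfolding p_def Q_def by simp
  qed
  have Pt: "(P \<longlongrightarrow> D) (at B0)"
  proof -
    have "(P \<longlongrightarrow> (\<Sum>n\<in>I. r n * Ln n * w n)) (at B0)"
      unfolding P_def by (intro tendsto_intros pt)
    moreover have "(\<Sum>n\<in>I. r n * Ln n * w n) = D"
      unfolding D_def I_def Ln_def by (simp add: algebra_simps)
    ultimately show ?thesis by simp
  qed
  have Kt: "(K n \<longlongrightarrow> r n * w n / D) (at B0)" if "n \<in> I" for n
    unfolding K_def by (intro tendsto_intros pt that Pt D0)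
  have ident: "mu B = (\<Sum>n\<in>I. K n B * (g n B - g n B0)) + \<mu>0"
    if B: "dist B B0 < \<epsilon>" "P B \<noteq> 0" for B
  proof -
    have "0 = F B (mu B) - F B0 \<mu>0" using mu_root[OF B(1)] F0 by simp
    also have "\<dots> = (\<Sum>n\<in>I. r n * Ln n * (f (xB n B) - f (x0 n)))"
      unfolding Fdef xB_def x0_def by (simp add: sum_subtractf[symmetric] algebra_simps)
    also have "\<dots> = (\<Sum>n\<in>I. r n * Ln n * p n B * (xB n B - x0 n))"
      unfolding p_def by (simp add: Qid algebra_simps)
    also have "\<dots> = (\<Sum>n\<in>I. r n * p n B * (g n B - g n B0) - (mu B - \<mu>0) * (r n * Ln n * p n B))"
      by (rule sum.cong) (auto simp: xB_def x0_def field_simps dest: Lnz)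
    also have "\<dots> = (\<Sum>n\<in>I. r n * p n B * (g n B - g n B0)) - (mu B - \<mu>0) * P B"
      unfolding P_def by (simp add: sum_subtractf sum_distrib_left)
    finally have "(mu B - \<mu>0) * P B = (\<Sum>n\<in>I. r n * p n B * (g n B - g n B0))" by simp
    then have "mu B - \<mu>0 = (\<Sum>n\<in>I. r n * p n B * (g n B - g n B0)) / P B"
      using B(2) by (simp add: field_simps)
    also have "\<dots> = (\<Sum>n\<in>I. K n B * (g n B - g n B0))"
      unfolding K_def by (simp add: sum_divide_distrib)
    finally show ?thesis by simp
  qed
  have Phid: "((\<lambda>B. (\<Sum>n\<in>I. K n B * (g n B - g n B0)) + \<mu>0) has_derivative
       (\<lambda>v. \<Sum>n\<in>I. (r n * w n / D) * frechet_derivative (g n) (at B0) v)) (at B0)"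
  proof (rule has_derivative_add_const, rule has_derivative_sum)
    fix n assume n: "n \<in> I"
    have "((\<lambda>B. g n B - g n B0) has_derivative frechet_derivative (g n) (at B0)) (at B0)"
      using has_derivative_diff[OF gdiff[OF n] has_derivative_const[of "g n B0"]] by simp
    from deriv_mult_cont0[OF this _ Kt[OF n]]
    show "((\<lambda>B. K n B * (g n B - g n B0)) has_derivative
           (\<lambda>v. (r n * w n / D) * frechet_derivative (g n) (at B0) v)) (at B0)" by simp
  qed
  have ev: "\<forall>\<^sub>F B in at B0. (\<Sum>n\<in>I. K n B * (g n B - g n B0)) + \<mu>0 = mu B"
  proof -
    have e1: "\<forall>\<^sub>F B in at B0. dist B B0 < \<epsilon>" using \<epsilon>(1) eventually_at by blast
    have e2: "\<forall>\<^sub>F B in at B0. P B \<noteq> 0" using Pt D0 tendsto_imp_eventually_ne by blast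
    from e1 e2 show ?thesis by eventually_elim (simp add: ident)
  qed
  have "(mu has_derivative
       (\<lambda>v. \<Sum>n\<in>I. (r n * w n / D) * frechet_derivative (g n) (at B0) v)) (at B0)"
    by (rule has_derivative_transform_eventually[OF Phid ev]) (auto simp: \<mu>0_def)
  then show ?thesis unfolding mu_def I_def D_def g_def .
qed

end
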